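(* Let $A$ be an $n\times n$ matrix with a designated set of large positions, and let $(X,Y)$ be a $q$-good restriction having a $p$-strong line, where $0\le p<1$. Let $m=|X|$ and $\varrho=2q/(1-p)$. If $m\ge6$, $(1-p)m>1$, $2\varrho m>1$ and $\varrho\le1/2$, then that line is in fact $(q+3\varrho)$-strong for $(X,Y)$.
   Context: Let $A=(a_{ij})_{i,j\in[n]}$ with a designated set $L\subseteq[n]\times[n]$ of large positions. A restriction is $(X,Y)$ with $X,Y\subseteq[n]$, $|X|=|Y|$; a generalized diagonal of $A[X,Y]$ is $\{(i,\sigma(i)):i\in X\}$ for a bijection $\sigma:X\to Y$, random meaning uniform $\sigma$; it is good if it contains exactly one large position; $(X,Y)$ is $q$-good if a random generalized diagonal is good with probability $\ge1-q$. For $i\in X$, row $i$ is $p$-strong for $(X,Y)$ if at least $(1-p)|Y|$ of the positions $\{(i,j):j\in Y\}$ are large; column $j\in Y$ is $p$-strong if at least $(1-p)|X|$ of $\{(i,j):i\in X\}$ are large. A $p$-strong line is a $p$-strong row or column. *)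

theory Defs
  imports Complex_Main
begin

text \<open>Matrix positions are pairs (i,j) of indices in [n] = {0..<n}; only the set L of
  large positions matters for the notions below, so the matrix entries are not modelled.\<close>

definition restriction :: "nat \<Rightarrow> nat set \<Rightarrow> nat set \<Rightarrow> bool" where
  "restriction n X Y \<longleftrightarrow> X \<subseteq> {..<n} \<and> Y \<subseteq> {..<n} \<and> card X = card Y"

text \<open>Distinct bijections give distinct diagonals, so the uniform distribution on bijections
  corresponds to the uniform distribution on this set.\<close>
definition gen_diagonals :: "nat set \<Rightarrow> nat set \<Rightarrow> (nat \<times> nat) set set" where
  "gen_diagonals X Y = {D. \<exists>\<sigma>. bij_betw \<sigma> X Y \<and> D = (\<lambda>i. (i, \<sigma> i)) ` X}"

definition good_diagonal :: "(nat \<times> nat) set \<Rightarrow> (nat \<times> nat) set \<Rightarrow> bool" where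
  "good_diagonal L D \<longleftrightarrow> card (D \<inter> L) = 1"

definition q_good :: "(nat \<times> nat) set \<Rightarrow> real \<Rightarrow> nat set \<Rightarrow> nat set \<Rightarrow> bool" where
  "q_good L q X Y \<longleftrightarrow>
     real (card {D \<in> gen_diagonals X Y. good_diagonal L D}) \<ge> (1 - q) * real (card (gen_diagonals X Y))"

datatype line = Row nat | Col nat

definition strong_line :: "(nat \<times> nat) set \<Rightarrow> real \<Rightarrow> nat set \<Rightarrow> nat set \<Rightarrow> line \<Rightarrow> bool" where
  "strong_line L p X Y l \<longleftrightarrow> (case l of
      Row i \<Rightarrow> i \<in> X \<and> real (card {j \<in> Y. (i, j) \<in> L}) \<ge> (1 - p) * real (card Y)
    | Col j \<Rightarrow> j \<in> Y \<and> real (card {i \<in> X. (i, j) \<in> L}) \<ge> (1 - p) * real (card X))"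

end

theory Submission imports Defs "HOL-Library.FuncSet" begin

definition PP :: "nat set \<Rightarrow> nat set \<Rightarrow> (nat \<Rightarrow> nat) set" where
  "PP X Y = {\<sigma>. \<sigma> \<in> extensional X \<and> bij_betw \<sigma> X Y}"

definition cnt :: "(nat \<times> nat) set \<Rightarrow> nat set \<Rightarrow> (nat \<Rightarrow> nat) \<Rightarrow> nat" where
  "cnt L X \<sigma> = card {x\<in>X. (x, \<sigma> x) \<in> L}"

definition gr :: "nat set \<Rightarrow> (nat \<Rightarrow> nat) \<Rightarrow> (nat \<times> nat) set" where
  "gr X \<sigma> = (\<lambda>x. (x, \<sigma> x)) ` X"

lemma PP_finite: "finite Y \<Longrightarrow> finite X \<Longrightarrow> finite (PP X Y)"
proof -
  assume "finite Y" "finite X"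
  have "PP X Y \<subseteq> PiE X (\<lambda>_. Y)"
    unfolding PP_def bij_betw_def by (auto simp: PiE_iff extensional_def)
  moreover have "finite (PiE X (\<lambda>_. Y))" using \<open>finite X\<close> \<open>finite Y\<close> by (simp add: finite_PiE)
  ultimately show ?thesis by (rule finite_subset)
qed

lemma PP_nonempty: "finite X \<Longrightarrow> finite Y \<Longrightarrow> card X = card Y \<Longrightarrow> PP X Y \<noteq> {}"
proof -
  assume "finite X" "finite Y" "card X = card Y"
  then obtain h where h: "bij_betw h X Y" using finite_same_card_bij by blast
  have "restrict h X \<in> PP X Y" unfolding PP_def using h
    by simp
  then show ?thesis by blast
qed

lemma gen_diag_PP: "gen_diagonals X Y = gr X ` PP X Y"
proof
  show "gen_diagonals X Y \<subseteq> gr X ` PP X Y"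
  proof
    fix D assume "D \<in> gen_diagonals X Y"
    then obtain \<sigma> where s: "bij_betw \<sigma> X Y" "D = (\<lambda>i. (i, \<sigma> i)) ` X"
      unfolding gen_diagonals_def by blast
    have "restrict \<sigma> X \<in> PP X Y" unfolding PP_def using s by simp
    moreover have "D = gr X (restrict \<sigma> X)" using s unfolding gr_def by auto
    ultimately show "D \<in> gr X ` PP X Y" by blast
  qed
next
  show "gr X ` PP X Y \<subseteq> gen_diagonals X Y"
  proof
    fix D assume "D \<in> gr X ` PP X Y"
    then obtain \<sigma> where "\<sigma> \<in> PP X Y" "D = gr X \<sigma>" by blast
    then show "D \<in> gen_diagonals X Y" unfolding gen_diagonals_def PP_def gr_def by blast
  qed
qed

lemma gr_inj: "inj_on (gr X) (PP X Y)"
proof (rule inj_onI)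
  fix \<sigma> \<tau> assume a: "\<sigma> \<in> PP X Y" "\<tau> \<in> PP X Y" "gr X \<sigma> = gr X \<tau>"
  have eq: "\<sigma> x = \<tau> x" for x
  proof (cases "x \<in> X")
    case True
    then have "(x, \<sigma> x) \<in> gr X \<sigma>" unfolding gr_def by blast
    then have "(x, \<sigma> x) \<in> (\<lambda>x. (x, \<tau> x)) ` X" using a(3) unfolding gr_def by simp
    then obtain y where "y \<in> X" "(x, \<sigma> x) = (y, \<tau> y)" by blast
    then have "x = y" "\<sigma> x = \<tau> y" by auto
    then show ?thesis by blast
  next
    case False
    have "\<sigma> \<in> extensional X" "\<tau> \<in> extensional X" using a(1,2) unfolding PP_def by auto
    then show ?thesis using False by (simp add: extensional_def)
  qed
  show "\<sigma> = \<tau>" using eq by (rule ext)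
qed

lemma good_gr: "good_diagonal L (gr X \<sigma>) \<longleftrightarrow> cnt L X \<sigma> = 1"
proof -
  have "gr X \<sigma> \<inter> L = (\<lambda>x. (x, \<sigma> x)) ` {x\<in>X. (x, \<sigma> x) \<in> L}" unfolding gr_def by auto
  moreover have "inj_on (\<lambda>x. (x, \<sigma> x)) {x\<in>X. (x, \<sigma> x) \<in> L}" by (auto intro: inj_onI)
  ultimately show ?thesis unfolding good_diagonal_def cnt_def by (simp add: card_image)
qed

lemma q_good_PP:
  assumes "q_good L q X Y"
  shows "real (card {\<sigma>\<in>PP X Y. cnt L X \<sigma> = 1}) \<ge> (1 - q) * real (card (PP X Y))"
proof -
  have e1: "card (gen_diagonals X Y) = card (PP X Y)"
    unfolding gen_diag_PP using gr_inj by (simp add: card_image)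
  have "{D \<in> gen_diagonals X Y. good_diagonal L D} = gr X ` {\<sigma>\<in>PP X Y. cnt L X \<sigma> = 1}"
    unfolding gen_diag_PP using good_gr by auto
  moreover have "inj_on (gr X) {\<sigma>\<in>PP X Y. cnt L X \<sigma> = 1}"
    using gr_inj by (rule inj_on_subset) auto
  ultimately have e2: "card {D \<in> gen_diagonals X Y. good_diagonal L D} = card {\<sigma>\<in>PP X Y. cnt L X \<sigma> = 1}"
    by (simp add: card_image)
  show ?thesis using assms unfolding q_good_def e1 e2 .
qed


definition sw :: "(nat \<Rightarrow> nat) \<Rightarrow> nat \<Rightarrow> nat \<Rightarrow> (nat \<Rightarrow> nat)" where
  "sw \<sigma> a b = \<sigma>(a := \<sigma> b, b := \<sigma> a)"

lemma sw_sw: "sw (sw \<sigma> a b) a b = \<sigma>"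
  unfolding sw_def by (auto simp: fun_eq_iff)

definition tr :: "nat \<Rightarrow> nat \<Rightarrow> nat \<Rightarrow> nat" where
  "tr a b x = (if x = a then b else if x = b then a else x)"

lemma sw_tr: "sw \<sigma> a b = \<sigma> \<circ> tr a b"
  unfolding sw_def tr_def by (rule ext) simp

lemma tr_bij: "a \<in> X \<Longrightarrow> b \<in> X \<Longrightarrow> bij_betw (tr a b) X X"
  by (rule bij_betw_byWitness[where f'="tr a b"]) (auto simp: tr_def)

lemma sw_PP:
  assumes "\<sigma> \<in> PP X Y" "a \<in> X" "b \<in> X"
  shows "sw \<sigma> a b \<in> PP X Y"
proof -
  have bij: "bij_betw \<sigma> X Y" and ext: "\<sigma> \<in> extensional X" using assms(1) unfolding PP_def by auto
  have "sw \<sigma> a b \<in> extensional X" using ext assms(2,3) unfolding sw_def extensional_def by auto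
  moreover have "bij_betw (sw \<sigma> a b) X Y" unfolding sw_tr
    using tr_bij[OF assms(2,3)] bij by (rule bij_betw_trans)
  ultimately show ?thesis unfolding PP_def by auto
qed

lemma card_pre:
  assumes "bij_betw \<sigma> X Y" "S \<subseteq> Y"
  shows "card {r\<in>X. \<sigma> r \<in> S} = card S"
proof -
  have img: "\<sigma> ` {r\<in>X. \<sigma> r \<in> S} = S" using assms unfolding bij_betw_def by auto
  have "bij_betw \<sigma> {r\<in>X. \<sigma> r \<in> S} S"
    by (rule bij_betw_subset[OF assms(1) _ img]) auto
  then show ?thesis by (rule bij_betw_same_card)
qed


lemma core:
  assumes finX: "finite X" and finY: "finite Y" and cXY: "card X = card Y" and iX: "i \<in> X"
    and qg: "q_good L q X Y" and k1: "1 \<le> card {j\<in>Y. (i, j) \<in> L}"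
  shows "real (card X - card {j\<in>Y. (i, j) \<in> L}) * real (card {j\<in>Y. (i, j) \<in> L} - 1)
          \<le> q * real (card X) * real (card X - 1)"
proof -
  define S where "S = {j\<in>Y. (i, j) \<in> L}"
  define k where "k = card S"
  define m where "m = card X"
  define P where "P = PP X Y"
  define U where "U = {\<sigma>\<in>P. \<sigma> i \<notin> S}"
  define V where "V = {\<sigma>\<in>P. \<sigma> i \<in> S}"
  define c where "c = cnt L X"
  define W1 where "W1 = Sigma U (\<lambda>\<sigma>. {r\<in>X. \<sigma> r \<in> S})"
  define W2 where "W2 = Sigma V (\<lambda>\<sigma>. {r\<in>X. \<sigma> r \<notin> S})"
  define F where "F = (\<lambda>(\<sigma>::nat\<Rightarrow>nat, r::nat). (sw \<sigma> i r, r))"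
  have SY: "S \<subseteq> Y" unfolding S_def by auto
  have finS: "finite S" using SY finY finite_subset by blast
  have km: "k \<le> m" unfolding k_def m_def cXY using SY finY by (simp add: card_mono)
  have k1': "1 \<le> k" using k1 unfolding k_def S_def .
  have finP: "finite P" unfolding P_def using PP_finite finX finY by blast
  have Pne: "P \<noteq> {}" unfolding P_def using PP_nonempty finX finY cXY by blast
  have Npos: "card P > 0" using finP Pne by (simp add: card_gt_0_iff)
  have bijP: "bij_betw \<sigma> X Y" if "\<sigma> \<in> P" for \<sigma> using that unfolding P_def PP_def by auto
  have finU: "finite U" and finV: "finite V" unfolding U_def V_def using finP by auto
  have UV: "card U + card V = card P"
  proof -
    have "U \<union> V = P" "U \<inter> V = {}" unfolding U_def V_def by auto
    then show ?thesis using finU finV card_Un_disjoint by metis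
  qed
  have Fbij: "bij_betw F {w\<in>W1. Q (fst (F w))} {w\<in>W2. Q (fst w)}" for Q
  proof (rule bij_betw_byWitness[where f'=F])
    show "\<forall>a\<in>{w \<in> W1. Q (fst (F w))}. F (F a) = a" unfolding F_def by (auto simp: sw_sw)
    show "\<forall>a'\<in>{w \<in> W2. Q (fst w)}. F (F a') = a'" unfolding F_def by (auto simp: sw_sw)
    show "F ` {w \<in> W1. Q (fst (F w))} \<subseteq> {w \<in> W2. Q (fst w)}"
    proof
      fix w assume "w \<in> F ` {w \<in> W1. Q (fst (F w))}"
      then obtain \<sigma> r where w: "w = F (\<sigma>, r)" "(\<sigma>, r) \<in> W1" "Q (fst (F (\<sigma>, r)))" by auto
      then have a: "\<sigma> \<in> P" "\<sigma> i \<notin> S" "r \<in> X" "\<sigma> r \<in> S" unfolding W1_def U_def by auto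
      then have ri: "r \<noteq> i" by auto
      have "sw \<sigma> i r \<in> P" using sw_PP a iX unfolding P_def by blast
      moreover have "sw \<sigma> i r i = \<sigma> r" "sw \<sigma> i r r = \<sigma> i" using ri unfolding sw_def by auto
      ultimately show "w \<in> {w \<in> W2. Q (fst w)}" using w a unfolding W2_def V_def F_def by auto
    qed
    show "F ` {w \<in> W2. Q (fst w)} \<subseteq> {w \<in> W1. Q (fst (F w))}"
    proof
      fix w assume "w \<in> F ` {w \<in> W2. Q (fst w)}"
      then obtain \<sigma> r where w: "w = F (\<sigma>, r)" "(\<sigma>, r) \<in> W2" "Q \<sigma>" by auto
      then have a: "\<sigma> \<in> P" "\<sigma> i \<in> S" "r \<in> X" "\<sigma> r \<notin> S" unfolding W2_def V_def by auto
      then have ri: "r \<noteq> i" by auto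
      have "sw \<sigma> i r \<in> P" using sw_PP a iX unfolding P_def by blast
      moreover have "sw \<sigma> i r i = \<sigma> r" "sw \<sigma> i r r = \<sigma> i" using ri unfolding sw_def by auto
      moreover have "F w = (\<sigma>, r)" using w(1) unfolding F_def by (simp add: sw_sw)
      ultimately show "w \<in> {w \<in> W1. Q (fst (F w))}" using w a unfolding W1_def U_def F_def by auto
    qed
  qed
  have fib1: "card {r\<in>X. \<sigma> r \<in> S} = k" if "\<sigma> \<in> P" for \<sigma>
    using card_pre[OF bijP[OF that] SY] unfolding k_def .
  have fib2: "card {r\<in>X. \<sigma> r \<notin> S} = m - k" if "\<sigma> \<in> P" for \<sigma>
  proof -
    have "{r\<in>X. \<sigma> r \<notin> S} = {r\<in>X. \<sigma> r \<in> Y - S}" using bijP[OF that] unfolding bij_betw_def by auto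
    also have "card \<dots> = card (Y - S)" by (rule card_pre[OF bijP[OF that]]) auto
    also have "\<dots> = m - k" unfolding m_def k_def cXY using SY finY by (simp add: card_Diff_subset finite_subset)
    finally show ?thesis .
  qed
  have cW1: "card W1 = k * card U" unfolding W1_def using finU finX fib1
    by (simp add: U_def)
  have cW2: "card W2 = (m - k) * card V" unfolding W2_def using finV finX fib2
    by (simp add: V_def)
  have "card W1 = card W2" using bij_betw_same_card[OF Fbij[of "\<lambda>_. True"]] by simp
  then have eq1: "k * card U = (m - k) * card V" using cW1 cW2 by simp
  define GU where "GU = {\<sigma>\<in>U. c \<sigma> = 1}"
  define BU where "BU = {\<sigma>\<in>U. c \<sigma> \<noteq> 1}"
  define GV where "GV = {\<sigma>\<in>V. c \<sigma> = 1}"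
  define BV where "BV = {\<sigma>\<in>V. c \<sigma> \<noteq> 1}"
  have cU: "card GU + card BU = card U"
  proof -
    have "GU \<union> BU = U" "GU \<inter> BU = {}" unfolding GU_def BU_def by auto
    then show ?thesis using finU card_Un_disjoint[of GU BU] by (metis finite_Un)
  qed
  have cV: "card GV + card BV = card V"
  proof -
    have "GV \<union> BV = V" "GV \<inter> BV = {}" unfolding GV_def BV_def by auto
    then show ?thesis using finV card_Un_disjoint[of GV BV] by (metis finite_Un)
  qed
  have cG: "card {\<sigma>\<in>P. c \<sigma> = 1} = card GU + card GV"
  proof -
    have "GU \<union> GV = {\<sigma>\<in>P. c \<sigma> = 1}" "GU \<inter> GV = {}" unfolding GU_def GV_def U_def V_def by auto
    moreover have "finite GU" "finite GV" using finU finV unfolding GU_def GV_def by auto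
    ultimately show ?thesis using card_Un_disjoint by metis
  qed
  have qg': "real (card GU + card GV) \<ge> (1 - q) * real (card P)"
    using q_good_PP[OF qg] cG unfolding P_def c_def by simp
  have cB2: "card {w\<in>W2. c (fst w) \<noteq> 1} = (m - k) * card BV"
  proof -
    have "{w\<in>W2. c (fst w) \<noteq> 1} = Sigma BV (\<lambda>\<sigma>. {r\<in>X. \<sigma> r \<notin> S})"
      unfolding W2_def BV_def by auto
    moreover have "finite BV" using finV unfolding BV_def by auto
    ultimately show ?thesis using finX fib2 by (simp add: BV_def V_def)
  qed
  have cB1: "card {w\<in>W1. c (fst (F w)) \<noteq> 1} = (m - k) * card BV"
    using bij_betw_same_card[OF Fbij[of "\<lambda>\<sigma>. c \<sigma> \<noteq> 1"]] cB2 by simp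
  define \<rho> where "\<rho> = (\<lambda>\<sigma>. the_elem {x\<in>X. (x, \<sigma> x) \<in> L})"
  have sub: "Sigma GU (\<lambda>\<sigma>. {r\<in>X. \<sigma> r \<in> S} - {\<rho> \<sigma>}) \<subseteq> {w\<in>W1. c (fst (F w)) \<noteq> 1}"
  proof
    fix w assume "w \<in> Sigma GU (\<lambda>\<sigma>. {r\<in>X. \<sigma> r \<in> S} - {\<rho> \<sigma>})"
    then obtain \<sigma> r where w: "w = (\<sigma>, r)" "\<sigma> \<in> GU" "r \<in> X" "\<sigma> r \<in> S" "r \<noteq> \<rho> \<sigma>" by auto
    then have a: "\<sigma> \<in> P" "\<sigma> i \<notin> S" "c \<sigma> = 1" unfolding GU_def U_def by auto
    have ri: "r \<noteq> i" using w a by auto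
    have "card {x\<in>X. (x, \<sigma> x) \<in> L} = 1" using a unfolding c_def cnt_def by simp
    then obtain z where z: "{x\<in>X. (x, \<sigma> x) \<in> L} = {z}" by (rule card_1_singletonE)
    have rz: "\<rho> \<sigma> = z" unfolding \<rho>_def z by simp
    have zX: "z \<in> X" "(z, \<sigma> z) \<in> L" using z by auto
    have "\<sigma> i \<in> Y" using bijP[OF a(1)] iX unfolding bij_betw_def by auto
    then have "(i, \<sigma> i) \<notin> L" using a(2) unfolding S_def by auto
    then have zi: "z \<noteq> i" using zX by auto
    define \<tau> where "\<tau> = sw \<sigma> i r"
    have "\<tau> i = \<sigma> r" "\<tau> z = \<sigma> z" using ri zi w(5) rz unfolding \<tau>_def sw_def by auto
    then have "{i, z} \<subseteq> {x\<in>X. (x, \<tau> x) \<in> L}" using w(4) zX iX unfolding S_def by auto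
    moreover have "finite {x\<in>X. (x, \<tau> x) \<in> L}" using finX by auto
    ultimately have "card {i, z} \<le> card {x\<in>X. (x, \<tau> x) \<in> L}" by (rule card_mono[rotated])
    then have "c \<tau> \<ge> 2" using zi unfolding c_def cnt_def by simp
    moreover have "(\<sigma>, r) \<in> W1" using w a unfolding W1_def U_def by auto
    ultimately show "w \<in> {w\<in>W1. c (fst (F w)) \<noteq> 1}" using w unfolding F_def \<tau>_def by auto
  qed
  have finGU: "finite GU" using finU unfolding GU_def by auto
  have "(k - 1) * card GU \<le> (\<Sum>\<sigma>\<in>GU. card ({r\<in>X. \<sigma> r \<in> S} - {\<rho> \<sigma>}))"
  proof -
    have "k - 1 \<le> card ({r\<in>X. \<sigma> r \<in> S} - {\<rho> \<sigma>})" if "\<sigma> \<in> GU" for \<sigma>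
      using fib1[of \<sigma>] that unfolding GU_def U_def by (simp add: card_Diff_singleton_if)
    then have "(\<Sum>\<sigma>\<in>GU. k - 1) \<le> (\<Sum>\<sigma>\<in>GU. card ({r\<in>X. \<sigma> r \<in> S} - {\<rho> \<sigma>}))"
      by (rule sum_mono)
    then show ?thesis by (simp add: mult.commute)
  qed
  also have "\<dots> = card (Sigma GU (\<lambda>\<sigma>. {r\<in>X. \<sigma> r \<in> S} - {\<rho> \<sigma>}))"
    using finGU finX by simp
  also have "\<dots> \<le> card {w\<in>W1. c (fst (F w)) \<noteq> 1}"
  proof (rule card_mono[OF _ sub])
    have "finite W1" unfolding W1_def using finU finX by auto
    then show "finite {w\<in>W1. c (fst (F w)) \<noteq> 1}" by auto
  qed
  finally have ineq: "(k - 1) * card GU \<le> (m - k) * card BV" using cB1 by simp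
  define u where "u = real (card U)"
  define v where "v = real (card V)"
  define N where "N = real (card P)"
  define gu where "gu = real (card GU)"
  define bu where "bu = real (card BU)"
  define gv where "gv = real (card GV)"
  define bv where "bv = real (card BV)"
  define K where "K = real k"
  define M where "M = real m"
  have K1: "K \<ge> 1" and KM: "K \<le> M" using k1' km unfolding K_def M_def by auto
  have e1: "K * u = (M - K) * v" using eq1 km unfolding K_def M_def u_def v_def
    by (metis of_nat_diff of_nat_mult)
  have e2: "(K - 1) * gu \<le> (M - K) * bv" using ineq km k1' unfolding K_def M_def gu_def bv_def
    by (metis of_nat_diff of_nat_le_iff of_nat_mult of_nat_1)
  have e3: "u + v = N" using UV unfolding u_def v_def N_def by (metis of_nat_add)
  have e4: "gu + bu = u" using cU unfolding gu_def bu_def u_def by (metis of_nat_add)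
  have e5: "gv + bv = v" using cV unfolding gv_def bv_def v_def by (metis of_nat_add)
  have e6: "gu + gv \<ge> (1 - q) * N" using qg' unfolding gu_def gv_def N_def by simp
  have Np: "N > 0" using Npos unfolding N_def by simp
  have bnn: "bu \<ge> 0" "bv \<ge> 0" unfolding bu_def bv_def by auto
  have "M * u = K * u + (M - K) * u" by (simp add: algebra_simps)
  also have "\<dots> = (M - K) * (u + v)" using e1 by (simp add: algebra_simps)
  finally have "M * u = (M - K) * N" using e3 by simp
  have "(K - 1) * (M - K) * N = (K - 1) * (M * u)"
    using \<open>M * u = (M - K) * N\<close> by (simp add: mult.assoc)
  also have "\<dots> = M * ((K - 1) * u)" by (simp add: algebra_simps)
  also have "\<dots> = M * ((K - 1) * gu + (K - 1) * bu)" unfolding e4[symmetric] by (simp add: algebra_simps)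
  also have "\<dots> \<le> M * ((M - K) * bv + (K - 1) * bu)"
    using e2 KM K1 by (intro mult_left_mono) auto
  also have "\<dots> \<le> M * ((M - 1) * bv + (M - 1) * bu)"
    using K1 KM bnn by (intro mult_left_mono add_mono mult_right_mono) auto
  also have "\<dots> = M * (M - 1) * (bu + bv)" by (simp add: algebra_simps)
  also have "\<dots> \<le> M * (M - 1) * (q * N)"
  proof (rule mult_left_mono)
    show "bu + bv \<le> q * N" using e3 e4 e5 e6 by (simp add: algebra_simps)
    show "0 \<le> M * (M - 1)" using K1 KM by simp
  qed
  finally have "((K - 1) * (M - K)) * N \<le> (q * M * (M - 1)) * N" by (simp add: algebra_simps)
  then have fin: "(K - 1) * (M - K) \<le> q * M * (M - 1)" using Np by simp
  have r1: "real (card X - card {j\<in>Y. (i, j) \<in> L}) = M - K"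
    using km unfolding M_def K_def m_def k_def S_def by simp
  have r2: "real (card {j\<in>Y. (i, j) \<in> L} - 1) = K - 1"
    using k1' unfolding K_def k_def S_def by simp
  have r3: "real (card X - 1) = M - 1" using K1 KM unfolding M_def m_def by simp
  have r4: "real (card X) = M" unfolding M_def m_def by simp
  show ?thesis unfolding r1 r2 r3 r4 using fin by (simp add: mult.commute)
qed


lemma arith_fin:
  fixes k m :: nat and p q :: real
  assumes "real k \<ge> (1 - p) * real m" "(1 - p) * real m > 1" "0 \<le> p" "p < 1"
    and "2 * (2 * q / (1 - p)) * real m > 1"
    and "real (m - k) * real (k - 1) \<le> q * real m * real (m - 1)"
    and "k \<le> m"
  shows "real k \<ge> (1 - (q + 3 * (2 * q / (1 - p)))) * real m"
proof -
  define r where "r = 2 * q / (1 - p)"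
  have p1: "1 - p > 0" using assms by simp
  have mpos: "real m > 0" using assms(2) p1 proof (cases "m = 0")
    case True then show ?thesis using assms(2) by simp
  qed simp
  have "r > 0"
  proof -
    have "2 * r * real m > 0" using assms(5) unfolding r_def by simp
    then show ?thesis using mpos by (simp add: zero_less_mult_iff)
  qed
  then have qpos: "q > 0" using p1 unfolding r_def by (simp add: zero_less_divide_iff)
  have "real k > 1" using assms(1,2) by simp
  then have k2: "k \<ge> 2" by simp
  have rk1: "real (k - 1) = real k - 1" using k2 by simp
  have rmk: "real (m - k) = real m - real k" using assms(7) by simp
  have rm1: "real (m - 1) = real m - 1" using k2 assms(7) by simp
  have A: "real k - 1 \<ge> (1 - p) * real m / 2" using assms(1) k2 by simp
  have B: "(real m - real k) * (real k - 1) \<le> q * real m * real m"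
  proof -
    have "q * real m * (real m - 1) \<le> q * real m * real m" using qpos mpos by simp
    then show ?thesis using assms(6) rk1 rmk rm1 by simp
  qed
  have C: "(real m - real k) * ((1 - p) * real m / 2) \<le> (real m - real k) * (real k - 1)"
    using A assms(7) by (intro mult_left_mono) auto
  have D: "(real m - real k) * ((1 - p) * real m / 2) \<le> q * real m * real m" using B C by linarith
  have E: "(real m - real k) * (1 - p) * real m = 2 * ((real m - real k) * ((1 - p) * real m / 2))"
    by (simp add: field_simps)
  have F: "(2 * q * real m) * real m = 2 * (q * real m * real m)" by simp
  have "(real m - real k) * (1 - p) * real m \<le> (2 * q * real m) * real m"
    unfolding E F using D by linarith
  then have "(real m - real k) * (1 - p) \<le> 2 * q * real m" using mpos by simp
  then have "real m - real k \<le> r * real m" unfolding r_def using p1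
    by (simp add: field_simps)
  moreover have "r * real m \<le> (q + 3 * r) * real m" using qpos \<open>r > 0\<close> mpos by simp
  ultimately show ?thesis unfolding r_def by (simp add: algebra_simps)
qed

lemma gd_swap:
  assumes "D \<in> gen_diagonals X Y"
  shows "prod.swap ` D \<in> gen_diagonals Y X"
proof -
  obtain \<sigma> where s: "bij_betw \<sigma> X Y" "D = (\<lambda>i. (i, \<sigma> i)) ` X"
    using assms unfolding gen_diagonals_def by blast
  define \<tau> where "\<tau> = inv_into X \<sigma>"
  have bt: "bij_betw \<tau> Y X" unfolding \<tau>_def using s(1) by (rule bij_betw_inv_into)
  have inj: "inj_on \<sigma> X" using s(1) by (rule bij_betw_imp_inj_on)
  have Y: "\<sigma> ` X = Y" using s(1) by (rule bij_betw_imp_surj_on)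
  have "(\<lambda>j. (j, \<tau> j)) ` Y = (\<lambda>j. (j, \<tau> j)) ` (\<sigma> ` X)" by (simp only: Y)
  also have "\<dots> = (\<lambda>x. (\<sigma> x, \<tau> (\<sigma> x))) ` X" by (simp only: image_image)
  also have "\<dots> = (\<lambda>x. (\<sigma> x, x)) ` X"
    by (rule image_cong[OF refl]) (simp add: \<tau>_def inv_into_f_f[OF inj])
  also have "\<dots> = prod.swap ` D" unfolding s(2) image_image by simp
  finally show ?thesis using bt unfolding gen_diagonals_def by blast
qed

lemma q_good_T:
  assumes "q_good L q X Y"
  shows "q_good (prod.swap ` L) q Y X"
proof -
  have inv: "prod.swap ` (prod.swap ` A) = A" for A :: "(nat \<times> nat) set" by (simp add: image_image)
  have GE: "gen_diagonals Y X = (\<lambda>D. prod.swap ` D) ` gen_diagonals X Y"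
  proof
    show "gen_diagonals Y X \<subseteq> (\<lambda>D. prod.swap ` D) ` gen_diagonals X Y"
    proof
      fix E assume "E \<in> gen_diagonals Y X"
      then have "prod.swap ` E \<in> gen_diagonals X Y" by (rule gd_swap)
      moreover have "E = prod.swap ` (prod.swap ` E)" using inv by simp
      ultimately show "E \<in> (\<lambda>D. prod.swap ` D) ` gen_diagonals X Y" by blast
    qed
    show "(\<lambda>D. prod.swap ` D) ` gen_diagonals X Y \<subseteq> gen_diagonals Y X" using gd_swap by blast
  qed
  have injI: "inj_on (\<lambda>D. prod.swap ` D) A" for A :: "(nat \<times> nat) set set"
    by (rule inj_onI) (metis inv)
  have good: "good_diagonal (prod.swap ` L) (prod.swap ` D) \<longleftrightarrow> good_diagonal L D" for D
  proof -
    have "prod.swap ` D \<inter> prod.swap ` L = prod.swap ` (D \<inter> L)" by (simp add: image_Int)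
    then show ?thesis unfolding good_diagonal_def by (simp add: card_image)
  qed
  have c1: "card (gen_diagonals Y X) = card (gen_diagonals X Y)" unfolding GE using injI by (simp add: card_image)
  have "{D \<in> gen_diagonals Y X. good_diagonal (prod.swap ` L) D}
        = (\<lambda>D. prod.swap ` D) ` {D \<in> gen_diagonals X Y. good_diagonal L D}"
    unfolding GE using good by auto
  then have c2: "card {D \<in> gen_diagonals Y X. good_diagonal (prod.swap ` L) D}
        = card {D \<in> gen_diagonals X Y. good_diagonal L D}" using injI by (simp add: card_image)
  show ?thesis using assms unfolding q_good_def c1 c2 .
qed

theorem lemma2p13:
  fixes n :: nat and L :: "(nat \<times> nat) set" and X Y :: "nat set"
    and p q :: real and l :: line
  assumes "L \<subseteq> {..<n} \<times> {..<n}"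
    and "restriction n X Y"
    and "q_good L q X Y"
    and "strong_line L p X Y l"
    and "0 \<le> p" and "p < 1"
    and "card X \<ge> 6"
    and "(1 - p) * real (card X) > 1"
    and "2 * (2 * q / (1 - p)) * real (card X) > 1"
    and "2 * q / (1 - p) \<le> 1 / 2"
  shows "strong_line L (q + 3 * (2 * q / (1 - p))) X Y l"
proof -
  have finX: "finite X" and finY: "finite Y" and cXY: "card X = card Y"
    using assms(2) unfolding restriction_def by (auto intro: finite_subset)
  show ?thesis
  proof (cases l)
    case (Row i)
    define k where "k = card {j\<in>Y. (i, j) \<in> L}"
    have iX: "i \<in> X" and kk: "real k \<ge> (1 - p) * real (card Y)"
      using assms(4) unfolding Row strong_line_def k_def by auto
    have km: "k \<le> card X" unfolding k_def cXY using finY by (simp add: card_mono)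
    have "real k > 1" using kk assms(8) cXY by simp
    then have k1: "1 \<le> k" by simp
    have c: "real (card X - k) * real (k - 1) \<le> q * real (card X) * real (card X - 1)"
      using core[OF finX finY cXY iX assms(3)] k1 unfolding k_def by simp
    have "real k \<ge> (1 - (q + 3 * (2 * q / (1 - p)))) * real (card X)"
      using arith_fin[OF _ assms(8,5,6,9) c km] kk cXY by simp
    then show ?thesis unfolding Row strong_line_def using iX cXY k_def by simp
  next
    case (Col j)
    define L' where "L' = prod.swap ` L"
    have memL': "(a, b) \<in> L' \<longleftrightarrow> (b, a) \<in> L" for a b unfolding L'_def by force
    define k where "k = card {i\<in>X. (j, i) \<in> L'}"
    have kdef: "k = card {i\<in>X. (i, j) \<in> L}" unfolding k_def memL' ..
    have jY: "j \<in> Y" and kk: "real k \<ge> (1 - p) * real (card X)"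
      using assms(4) unfolding Col strong_line_def kdef by auto
    have km: "k \<le> card X" unfolding k_def using finX by (simp add: card_mono)
    have "real k > 1" using kk assms(8) by simp
    then have k1: "1 \<le> k" by simp
    have qg: "q_good L' q Y X" unfolding L'_def using assms(3) by (rule q_good_T)
    have c: "real (card Y - k) * real (k - 1) \<le> q * real (card Y) * real (card Y - 1)"
      using core[OF finY finX cXY[symmetric] jY qg] k1 unfolding k_def by simp
    have "real k \<ge> (1 - (q + 3 * (2 * q / (1 - p)))) * real (card X)"
      using arith_fin[OF kk assms(8,5,6,9) _ km] c cXY by simp
    then show ?thesis unfolding Col strong_line_def using jY kdef by simp
  qed
qed

end
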